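(* Let $n\geq2$, $H=\{x\in\mathbb{R}^{n+1}:\sum_i x_i=0\}$, $A_n=\mathbb{Z}^{n+1}\cap H$, $\mathcal{P}$ the Voronoi region of $A_n$ in $H$ with vertex set $V_{\mathcal{P}}$, $p_H$ the orthogonal projection onto $H$, and $A_n^\#=p_H(\mathbb{Z}^{n+1})$. Let $\tilde G$ be the Cayley graph on $\frac12A_n^\#$ with generating set $\frac12V_{\mathcal{P}}$ (i.e. $x,y$ adjacent iff $x-y\in\frac12V_{\mathcal{P}}$), with graph distance $\tilde d$. Then for all $u_1,u_2\in\frac12A_n^\#$, $\tilde d(u_1,u_2)=2$ implies $\Vert u_1-u_2\Vert_{\mathcal{P}}=1$.
   Context: The Voronoi region of a lattice $\Lambda$ in a Euclidean space $E$ is $\{z\in E:\langle z-x,z-x\rangle\geq\langle z,z\rangle\ \forall x\in\Lambda\}$. $\Vert x\Vert_{\mathcal{P}}=\inf\{\lambda\geq0:x\in\lambda\mathcal{P}\}$. It is known that $V_{\mathcal{P}}=\{p_H(u):u\in\{0,1\}^{n+1}\setminus\{(0,\dots,0),(1,\dots,1)\}\}$ and that $\Vert x\Vert_{\mathcal{P}}=\max_j x_j-\min_i x_i$ for $x\in H$. *)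

theory Defs
  imports "HOL-Analysis.Analysis"
begin

text \<open>Ambient space R^(n+1) is modelled as real^'n with CARD('n) = n+1.\<close>

definition hypH :: "(real^'n) set" where
  "hypH = {x. (\<Sum>i\<in>UNIV. x $ i) = 0}"

definition latA :: "(real^'n) set" where
  "latA = {x \<in> hypH. \<forall>i. x $ i \<in> \<int>}"

definition intvecs :: "(real^'n) set" where
  "intvecs = {x. \<forall>i. x $ i \<in> \<int>}"

definition voronoiP :: "(real^'n) set" where
  "voronoiP = {z \<in> hypH. \<forall>x\<in>latA. inner (z - x) (z - x) \<ge> inner z z}"

definition vertsP :: "(real^'n) set" where
  "vertsP = {v. v extreme_point_of voronoiP}"

definition projH :: "real^'n \<Rightarrow> real^'n" where
  "projH x = x - ((\<Sum>i\<in>UNIV. x $ i) / real CARD('n)) *\<^sub>R (\<chi> i. 1)"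

definition dualA :: "(real^'n) set" where
  "dualA = projH ` intvecs"

definition halfdualA :: "(real^'n) set" where
  "halfdualA = (\<lambda>x. (1/2::real) *\<^sub>R x) ` dualA"

definition gens :: "(real^'n) set" where
  "gens = (\<lambda>x. (1/2::real) *\<^sub>R x) ` vertsP"

definition cayley_walk :: "nat \<Rightarrow> real^'n \<Rightarrow> real^'n \<Rightarrow> bool" where
  "cayley_walk k u v \<longleftrightarrow> (\<exists>w :: nat \<Rightarrow> real^'n. w 0 = u \<and> w k = v \<and>
      (\<forall>i\<le>k. w i \<in> halfdualA) \<and> (\<forall>i<k. w i - w (Suc i) \<in> gens))"

definition cayley_dist :: "real^'n \<Rightarrow> real^'n \<Rightarrow> enat" where
  "cayley_dist u v = (if \<exists>k. cayley_walk k u v then enat (LEAST k. cayley_walk k u v) else \<infinity>)"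

definition normP :: "real^'n \<Rightarrow> real" where
  "normP x = Inf {t. t \<ge> 0 \<and> x \<in> (\<lambda>y. t *\<^sub>R y) ` voronoiP}"

end

theory Submission imports Defs begin

lemma projH_comp: "projH (x::real^'n) $ i = x $ i - (\<Sum>j\<in>UNIV. x $ j) / real CARD('n)"
  by (simp add: projH_def)

lemma projH_in_H: "projH (x::real^'n) \<in> hypH"
  by (simp add: hypH_def projH_comp sum_subtractf)

lemma projH_add: "projH ((x::real^'n) + y) = projH x + projH y"
  by (simp add: vec_eq_iff projH_comp sum.distrib add_divide_distrib)

lemma projH_H: "(x::real^'n) \<in> hypH \<Longrightarrow> projH x = x"
  by (simp add: vec_eq_iff projH_comp hypH_def)

lemma projH_eq:
  assumes "\<forall>i j. (x::real^'n) $ i - x $ j = y $ i - y $ j"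
  shows "projH x = projH y"
proof -
  obtain i0 :: 'n where True by simp
  define d where "d = x $ i0 - y $ i0"
  have xd: "\<And>k. x $ k = y $ k + d" using assms unfolding d_def by (metis add.commute diff_add_cancel diff_diff_eq2)
  have "(\<Sum>j\<in>UNIV. x $ j) = (\<Sum>j\<in>UNIV. y $ j) + real CARD('n) * d"
    by (simp add: xd sum.distrib)
  then show ?thesis by (simp add: vec_eq_iff projH_comp xd add_divide_distrib)
qed

lemma term_ineq:
  fixes s kk :: real
  assumes "0 \<le> s" "s \<le> 1" "kk \<in> \<int>"
  shows "2 * s * kk \<le> kk^2 + kk"
proof -
  obtain n where kk: "kk = of_int n" using assms(3) Ints_cases by blast
  consider "n \<ge> 1" | "n = 0" | "n \<le> -1" by linarith
  then show ?thesis
  proof cases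
    case 1
    then have k1: "kk \<ge> 1" using kk by simp
    have "s * kk \<le> 1*kk" using assms k1 by (intro mult_right_mono) auto
    moreover have "kk*1 \<le> kk*kk" using k1 by (intro mult_left_mono) auto
    ultimately show ?thesis by (simp add: power2_eq_square)
  next
    case 2 then show ?thesis using kk by simp
  next
    case 3
    then have k1: "kk \<le> -1" using kk by simp
    have "s * kk \<le> 0" using assms k1 by (simp add: mult_nonneg_nonpos)
    moreover have "0 \<le> kk*(kk+1)" using k1 by (intro mult_nonpos_nonpos) auto
    ultimately show ?thesis by (simp add: power2_eq_square algebra_simps)
  qed
qed

lemma voronoi_iff:
  "(z::real^'n) \<in> voronoiP \<longleftrightarrow> z \<in> hypH \<and> (\<forall>i j. z$i - z$j \<le> 1)"
proof
  assume z: "z \<in> voronoiP"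
  have "z $ i - z $ j \<le> 1" for i j
  proof (cases "i = j")
    case False
    define x :: "real^'n" where "x = axis i 1 - axis j 1"
    have "x \<in> latA"
      using False unfolding latA_def hypH_def x_def
      by (auto simp: axis_def sum_subtractf)
    then have "inner (z - x) (z - x) \<ge> inner z z" using z unfolding voronoiP_def by auto
    then show ?thesis using False
      by (simp add: x_def inner_diff_left inner_diff_right inner_commute inner_axis inner_axis_axis) (simp add: axis_def)
  qed simp
  then show "z \<in> hypH \<and> (\<forall>i j. z$i - z$j \<le> 1)" using z unfolding voronoiP_def by auto
next
  assume z: "z \<in> hypH \<and> (\<forall>i j. z$i - z$j \<le> 1)"
  define m where "m = Min (range (\<lambda>i. z $ i))"
  have mle: "m \<le> z $ i" for i unfolding m_def by auto
  obtain k0 where k0: "m = z $ k0"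
  proof -
    have "m \<in> range (\<lambda>i. z $ i)" unfolding m_def by (rule Min_in) auto
    then show ?thesis using that by auto
  qed
  have ub: "z $ i - m \<le> 1" for i using z k0 by auto
  have "inner z z \<le> inner (z - x) (z - x)" if x: "x \<in> latA" for x
  proof -
    have xs: "(\<Sum>i\<in>UNIV. x $ i) = 0" and xi: "\<And>i. x $ i \<in> \<int>"
      using x unfolding latA_def hypH_def by auto
    have "2 * inner z x = (\<Sum>i\<in>UNIV. 2 * z $ i * x $ i)"
      by (simp add: inner_vec_def sum_distrib_left mult.assoc)
    also have "\<dots> = (\<Sum>i\<in>UNIV. 2*(z$i - m)*x$i) + 2*m*(\<Sum>i\<in>UNIV. x $ i)"
      by (simp add: sum_distrib_left algebra_simps sum.distrib sum_subtractf)
    also have "\<dots> = (\<Sum>i\<in>UNIV. 2*(z$i - m)*x$i)" using xs by simp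
    also have "\<dots> \<le> (\<Sum>i\<in>UNIV. (x$i)^2 + x$i)"
      by (intro sum_mono term_ineq) (use mle ub xi in auto)
    also have "\<dots> = inner x x" by (simp add: sum.distrib xs inner_vec_def power2_eq_square)
    finally have "2 * inner z x \<le> inner x x" .
    then show ?thesis by (simp add: inner_diff_left inner_diff_right inner_commute)
  qed
  then show "z \<in> voronoiP" using z unfolding voronoiP_def by auto
qed


lemma normP_one:
  assumes "(x::real^'n) \<in> hypH" "\<forall>i j. x$i - x$j \<le> 1" "x$i0 - x$j0 = 1"
  shows "normP x = 1"
  unfolding normP_def
proof (rule cInf_eq_minimum)
  have "x \<in> voronoiP" using assms by (simp add: voronoi_iff)
  then show "1 \<in> {t. t \<ge> 0 \<and> x \<in> (\<lambda>y. t *\<^sub>R y) ` voronoiP}" by force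
next
  fix t assume "t \<in> {t. t \<ge> 0 \<and> x \<in> (\<lambda>y. t *\<^sub>R y) ` voronoiP}"
  then obtain y where t: "t \<ge> 0" and y: "y \<in> voronoiP" and xy: "x = t *\<^sub>R y" by auto
  have "y$i0 - y$j0 \<le> 1" using y by (simp add: voronoi_iff)
  then have "t * (y$i0 - y$j0) \<le> t * 1" using t by (intro mult_left_mono) auto
  moreover have "x$i0 - x$j0 = t * (y$i0 - y$j0)" using xy by (simp add: algebra_simps)
  ultimately show "1 \<le> t" using assms(3) by simp
qed

lemma vert_form:
  assumes N: "CARD('n) \<ge> 2" and v: "(v::real^'n) \<in> vertsP"
  shows "\<exists>y. (\<forall>i. y$i = 0 \<or> y$i = 1) \<and> v = projH y"
proof -
  have ext: "v extreme_point_of voronoiP" using v by (simp add: vertsP_def)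
  then have vP: "v \<in> voronoiP" by (simp add: extreme_point_of_def)
  then have vH: "v \<in> hypH" and vd: "\<And>i j. v$i - v$j \<le> 1" by (auto simp: voronoi_iff)
  define m where "m = Min (range (\<lambda>i. v $ i))"
  have mle: "m \<le> v $ i" for i unfolding m_def by auto
  obtain k0 where k0: "m = v $ k0"
  proof -
    have "m \<in> range (\<lambda>i. v $ i)" unfolding m_def by (rule Min_in) auto
    then show ?thesis using that by auto
  qed
  have ub: "v $ i \<le> m + 1" for i using vd[of i k0] k0 by auto
  have y01: "v $ i - m = 0 \<or> v $ i - m = 1" for i
  proof (rule ccontr)
    assume "\<not> (v $ i - m = 0 \<or> v $ i - m = 1)"
    then have lo: "m < v $ i" and hi: "v $ i < m + 1" using mle[of i] ub[of i] by auto
    define e where "e = min (v $ i - m) (1 - (v $ i - m))"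
    have e0: "e > 0" and e1: "e \<le> v $ i - m" and e2: "e \<le> 1 - (v $ i - m)"
      using lo hi by (auto simp: e_def)
    define d :: "real^'n" where "d = (\<chi> k. if k = i then 1 else 0)"
    define zp where "zp = projH (v + e *\<^sub>R d)"
    define zm where "zm = projH (v - e *\<^sub>R d)"
    have dp: "zp $ k - zp $ l = (v $ k + e * d $ k) - (v $ l + e * d $ l)" for k l
      by (simp add: zp_def projH_comp)
    have dm: "zm $ k - zm $ l = (v $ k - e * d $ k) - (v $ l - e * d $ l)" for k l
      by (simp add: zm_def projH_comp)
    have "zp \<in> voronoiP"
    proof -
      have "zp $ k - zp $ l \<le> 1" for k l
        using dp[of k l] vd[of k l] mle[of l] e2 e0 ub[of k]
        by (auto simp: d_def)
      then show ?thesis by (simp add: voronoi_iff zp_def projH_in_H)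
    qed
    moreover have "zm \<in> voronoiP"
    proof -
      have "zm $ k - zm $ l \<le> 1" for k l
        using dm[of k l] vd[of k l] mle[of l] e1 e0 ub[of k]
        by (auto simp: d_def)
      then show ?thesis by (simp add: voronoi_iff zm_def projH_in_H)
    qed
    moreover have "midpoint zp zm = v"
    proof -
      have "zp + zm = projH (2 *\<^sub>R v)" unfolding zp_def zm_def
        by (simp add: projH_add[symmetric] scaleR_2)
      also have "\<dots> = 2 *\<^sub>R v" using vH by (simp add: projH_H hypH_def sum_distrib_left[symmetric])
      finally show ?thesis by (simp add: midpoint_def)
    qed
    moreover have "zp \<noteq> zm"
    proof
      assume eq: "zp = zm"
      obtain l where l: "l \<noteq> i"
      proof -
        have "card (UNIV - {i}) \<ge> 1" using N by (simp add: card_Diff_singleton)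
        then have "UNIV - {i} \<noteq> {}" by (metis card.empty not_one_le_zero)
        then show ?thesis using that by auto
      qed
      have "zp $ i - zp $ l = zm $ i - zm $ l" using eq by simp
      then show False using dp[of i l] dm[of i l] l e0 by (simp add: d_def)
    qed
    ultimately show False using ext unfolding extreme_point_of_def
      by (metis midpoint_in_open_segment)
  qed
  define y :: "real^'n" where "y = (\<chi> k. v $ k - m)"
  have "projH y = projH v" by (rule projH_eq) (simp add: y_def)
  then have "v = projH y" using vH by (simp add: projH_H)
  moreover have "\<forall>i. y$i = 0 \<or> y$i = 1" using y01 by (simp add: y_def)
  ultimately show ?thesis by blast
qed

lemma vert_of:
  assumes w01: "\<forall>k. (w::real^'n) $ k = 0 \<or> w $ k = 1" and wi: "w $ i = 1" and wj: "w $ j = 0"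
  shows "projH w \<in> vertsP"
proof -
  define z where "z = projH w"
  have zd: "z $ k - z $ l = w $ k - w $ l" for k l by (simp add: z_def projH_comp)
  have zP: "z \<in> voronoiP"
  proof -
    have "z $ k - z $ l \<le> 1" for k l using zd[of k l] w01[rule_format, of k] w01[rule_format, of l] by auto
    then show ?thesis by (simp add: voronoi_iff z_def projH_in_H)
  qed
  have key: "a = z" if aP: "a \<in> voronoiP" and a1: "\<And>k l. w $ k = 1 \<Longrightarrow> w $ l = 0 \<Longrightarrow> a $ k - a $ l = 1" for a
  proof -
    have aH: "a \<in> hypH" using aP by (simp add: voronoi_iff)
    have "a $ k - a $ l = w $ k - w $ l" for k l
    proof -
      consider "w$k = 1" "w$l = 1" | "w$k = 1" "w$l = 0" | "w$k = 0" "w$l = 1" | "w$k = 0" "w$l = 0"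
        using w01 by blast
      then show ?thesis
      proof cases
        case 1 then show ?thesis using a1[of k j] a1[of l j] wj by simp
      next
        case 2 then show ?thesis using a1[of k l] by simp
      next
        case 3 then show ?thesis using a1[of l k] by simp
      next
        case 4 then show ?thesis using a1[of i k] a1[of i l] wi by simp
      qed
    qed
    then have "projH a = projH w" by (intro projH_eq) auto
    then show ?thesis using aH by (simp add: projH_H z_def)
  qed
  have "z extreme_point_of voronoiP"
    unfolding extreme_point_of_def
  proof (intro conjI ballI zP notI)
    fix a b assume aP: "a \<in> voronoiP" and bP: "b \<in> voronoiP" and zs: "z \<in> open_segment a b"
    then obtain u where ab: "a \<noteq> b" and u0: "0 < u" and u1: "u < 1" and zu: "z = (1 - u) *\<^sub>R a + u *\<^sub>R b"
      by (auto simp: in_segment)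
    have both: "a $ k - a $ l = 1 \<and> b $ k - b $ l = 1" if "w $ k = 1" "w $ l = 0" for k l
    proof -
      define p where "p = a $ k - a $ l"
      define q where "q = b $ k - b $ l"
      have p1: "p \<le> 1" and q1: "q \<le> 1" using aP bP by (auto simp: voronoi_iff p_def q_def)
      have zc: "\<And>r. z $ r = (1 - u) * a $ r + u * b $ r" using zu by simp
      have "z $ k - z $ l = (1 - u) * p + u * q" unfolding zc by (simp add: p_def q_def algebra_simps)
      then have eq: "(1 - u) * p + u * q = 1" using zd[of k l] that by simp
      have "u * q \<le> u * 1" using q1 u0 by (intro mult_left_mono) auto
      moreover have "(1 - u) * p \<le> (1 - u) * 1" using p1 u1 by (intro mult_left_mono) auto
      ultimately have "(1 - u) * p = (1 - u) * 1 \<and> u * q = u * 1" using eq by (smt (verit))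
      then have "(1 - u) * p = (1 - u) * 1" "u * q = u * 1" by auto
      then have "p = 1" "q = 1" using u0 u1 by auto
      then show ?thesis by (simp add: p_def q_def)
    qed
    have "a = z" using key[OF aP] both by blast
    moreover have "b = z" using key[OF bP] both by blast
    ultimately show False using ab by simp
  qed
  then show ?thesis by (simp add: vertsP_def z_def)
qed


lemma projH_scale: "projH (r *\<^sub>R (x::real^'n)) = r *\<^sub>R projH x"
  by (simp add: vec_eq_iff projH_comp sum_distrib_left[symmetric] algebra_simps)

lemma projH_zero: "projH (0::real^'n) = 0"
  by (simp add: vec_eq_iff projH_comp)

theorem lemma10:
  fixes u1 u2 :: "real^'n"
  assumes "CARD('n) \<ge> 3"
    and "u1 \<in> halfdualA" and "u2 \<in> halfdualA"
    and "cayley_dist u1 u2 = 2"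
  shows "normP (u1 - u2) = 1"
proof -
  have N: "CARD('n) \<ge> 2" using assms(1) by simp
  have ex: "\<exists>k. cayley_walk k u1 u2" and L: "(LEAST k. cayley_walk k u1 u2) = 2"
    using assms(4) unfolding cayley_dist_def by (auto split: if_splits simp: numeral_eq_enat)
  have W2: "cayley_walk 2 u1 u2" using LeastI_ex[OF ex] L by simp
  have n0: "\<not> cayley_walk 0 u1 u2" using not_less_Least[of 0 "\<lambda>k. cayley_walk k u1 u2"] L by simp
  have n1: "\<not> cayley_walk 1 u1 u2" using not_less_Least[of 1 "\<lambda>k. cayley_walk k u1 u2"] L by simp
  have ne: "u1 \<noteq> u2"
  proof
    assume "u1 = u2"
    then have "cayley_walk 0 u1 u2" unfolding cayley_walk_def
      using assms(2) by (intro exI[of _ "\<lambda>_. u1"]) auto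
    then show False using n0 by simp
  qed
  have ng: "u1 - u2 \<notin> gens"
  proof
    assume g: "u1 - u2 \<in> gens"
    have "cayley_walk 1 u1 u2" unfolding cayley_walk_def
      using assms(2,3) g by (intro exI[of _ "\<lambda>i. if i = 0 then u1 else u2"]) (auto simp: le_Suc_eq)
    then show False using n1 by simp
  qed
  obtain w where w0: "w 0 = u1" and w2: "w 2 = u2" and wg: "\<And>i. i < 2 \<Longrightarrow> w i - w (Suc i) \<in> gens"
    using W2 unfolding cayley_walk_def by auto
  have g1: "u1 - w 1 \<in> gens" using wg[of 0] w0 by simp
  have g2: "w 1 - u2 \<in> gens" using wg[of 1] w2 by (simp add: numeral_2_eq_2)
  obtain v1 where v1: "v1 \<in> vertsP" "u1 - w 1 = (1/2) *\<^sub>R v1" using g1 unfolding gens_def by auto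
  obtain v2 where v2: "v2 \<in> vertsP" "w 1 - u2 = (1/2) *\<^sub>R v2" using g2 unfolding gens_def by auto
  obtain a where a01: "\<forall>i. a$i = 0 \<or> a$i = 1" and a: "v1 = projH a" using vert_form[OF N v1(1)] by blast
  obtain b where b01: "\<forall>i. b$i = 0 \<or> b$i = 1" and b: "v2 = projH b" using vert_form[OF N v2(1)] by blast
  define c where "c = a + b"
  have xc: "u1 - u2 = projH ((1/2) *\<^sub>R c)"
  proof -
    have "u1 - u2 = (u1 - w 1) + (w 1 - u2)" by simp
    also have "\<dots> = (1/2) *\<^sub>R (projH a + projH b)" using v1 v2 a b by (simp add: scaleR_add_right)
    finally show ?thesis by (simp add: projH_scale projH_add c_def)
  qed
  have c012: "c $ k = 0 \<or> c $ k = 1 \<or> c $ k = 2" for k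
    using a01[rule_format, of k] b01[rule_format, of k] by (auto simp: c_def)
  have xd: "(u1 - u2) $ k - (u1 - u2) $ l = (c $ k - c $ l) / 2" for k l
    unfolding xc by (simp add: projH_comp algebra_simps)
  show ?thesis
  proof (cases "\<exists>i j. c $ i = 2 \<and> c $ j = 0")
    case True
    then obtain i j where ij: "c $ i = 2" "c $ j = 0" by blast
    show ?thesis
    proof (rule normP_one[of _ i j])
      show "u1 - u2 \<in> hypH" unfolding xc by (rule projH_in_H)
      show "\<forall>k l. (u1 - u2) $ k - (u1 - u2) $ l \<le> 1"
      proof (intro allI)
        fix k l
        show "(u1 - u2) $ k - (u1 - u2) $ l \<le> 1"
          unfolding xd using c012[of k] c012[of l] by auto
      qed
      show "(u1 - u2) $ i - (u1 - u2) $ j = 1" using xd[of i j] ij by simp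
    qed
  next
    case False
    obtain w' where w01: "\<forall>k. w' $ k = 0 \<or> w' $ k = 1" and pw: "projH w' = projH c"
    proof (cases "\<forall>i. c $ i \<noteq> 2")
      case True
      then show ?thesis using that[of c] c012 by blast
    next
      case F2: False
      then have "\<forall>j. c $ j \<noteq> 0" using False by blast
      then have "\<forall>k. (\<chi> k. c $ k - 1) $ k = 0 \<or> (\<chi> k. c $ k - 1) $ k = 1" using c012 by force
      moreover have "projH (\<chi> k. c $ k - 1) = projH c" by (rule projH_eq) simp
      ultimately show ?thesis using that by blast
    qed
    have xw: "u1 - u2 = (1/2) *\<^sub>R projH w'" using xc pw by (simp add: projH_scale)
    show ?thesis
    proof (cases "\<exists>i j. w' $ i = 1 \<and> w' $ j = 0")
      case True
      then obtain i j where "w' $ i = 1" "w' $ j = 0" by blast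
      then have "projH w' \<in> vertsP" using vert_of[OF w01] by blast
      then have "u1 - u2 \<in> gens" unfolding gens_def xw by blast
      then show ?thesis using ng by simp
    next
      case F3: False
      have "\<forall>i j. w' $ i - w' $ j = (0::real^'n) $ i - (0::real^'n) $ j"
        using F3 w01 by force
      then have "projH w' = projH 0" by (rule projH_eq)
      then have "u1 - u2 = 0" using xw by (simp add: projH_zero)
      then show ?thesis using ne by simp
    qed
  qed
qed

end
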